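(* Let $f:D^n\to\mathbb R$. The Lovász extension $f^L:[-\alpha,1]^n\to\mathbb R$ of $f$ is convex if and only if $f$ is $\alpha$-bisubmodular.
   Context: Fix $\alpha\in(0,1]$ and $D=\{-\alpha,0,1\}\subset\mathbb R$. Define the partial order $\preceq$ on $D$ by $0\preceq 1$, $0\preceq -\alpha$ (plus reflexivity), with $1$ and $-\alpha$ incomparable; extend it componentwise to $D^n$. Define $\wedge_0$ on $D$ by $1\wedge_0(-\alpha)=(-\alpha)\wedge_0 1=0$ and $x\wedge_0 y=\min(x,y)$ w.r.t. $\preceq$ if $\{x,y\}\ne\{-\alpha,1\}$; for $a\in D$ define $\vee_a$ by $1\vee_a(-\alpha)=(-\alpha)\vee_a 1=a$ and $x\vee_a y=\max(x,y)$ w.r.t. $\preceq$ if $\{x,y\}\ne\{-\alpha,1\}$; extend componentwise to $D^n$. $f:D^n\to\mathbb R$ is $\alpha$-bisubmodular if for all $\mathbf a,\mathbf b\in D^n$: $f(\mathbf a\wedge_0\mathbf b)+\alpha f(\mathbf a\vee_0\mathbf b)+(1-\alpha)f(\mathbf a\vee_1\mathbf b)\le f(\mathbf a)+f(\mathbf b)$. For $\mathbf x\in[-\alpha,1]^n$, $\mathcal P(\mathbf x)$ is the set of $\lambda:D^n\to[0,1]$ with $\sum_{\mathbf a}\lambda(\mathbf a)=1$ and $\sum_{\mathbf a}\lambda(\mathbf a)\mathbf a=\mathbf x$. For each $\mathbf x$ there is a unique $\lambda_{\mathbf x}\in\mathcal P(\mathbf x)$ whose support is a chain w.r.t. $\preceq$;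 the Lovász extension is $f^L(\mathbf x)=\sum_{\mathbf a\in D^n}\lambda_{\mathbf x}(\mathbf a)f(\mathbf a)$. *)

theory Defs
  imports "HOL-Analysis.Analysis"
begin

definition Dom :: "real \<Rightarrow> real set" where
  "Dom \<alpha> = {-\<alpha>, 0, 1}"

definition Domn :: "real \<Rightarrow> (real ^ 'n::finite) set" where
  "Domn \<alpha> = {a. \<forall>i. a $ i \<in> Dom \<alpha>}"

definition preD :: "real \<Rightarrow> real \<Rightarrow> real \<Rightarrow> bool" where
  "preD \<alpha> x y \<longleftrightarrow> x = y \<or> (x = 0 \<and> (y = 1 \<or> y = -\<alpha>))"

definition preDn :: "real \<Rightarrow> real ^ 'n::finite \<Rightarrow> real ^ 'n \<Rightarrow> bool" where
  "preDn \<alpha> a b \<longleftrightarrow> (\<forall>i. preD \<alpha> (a $ i) (b $ i))"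

definition meet0 :: "real \<Rightarrow> real \<Rightarrow> real \<Rightarrow> real" where
  "meet0 \<alpha> x y = (if {x, y} = {-\<alpha>, 1} then 0 else (if preD \<alpha> x y then x else y))"

definition joinD :: "real \<Rightarrow> real \<Rightarrow> real \<Rightarrow> real \<Rightarrow> real" where
  "joinD \<alpha> c x y = (if {x, y} = {-\<alpha>, 1} then c else (if preD \<alpha> x y then y else x))"

definition meet0n :: "real \<Rightarrow> real ^ 'n::finite \<Rightarrow> real ^ 'n \<Rightarrow> real ^ 'n" where
  "meet0n \<alpha> a b = (\<chi> i. meet0 \<alpha> (a $ i) (b $ i))"

definition joinn :: "real \<Rightarrow> real \<Rightarrow> real ^ 'n::finite \<Rightarrow> real ^ 'n \<Rightarrow> real ^ 'n" where
  "joinn \<alpha> c a b = (\<chi> i. joinD \<alpha> c (a $ i) (b $ i))"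

definition alpha_bisubmodular :: "real \<Rightarrow> (real ^ 'n::finite \<Rightarrow> real) \<Rightarrow> bool" where
  "alpha_bisubmodular \<alpha> f \<longleftrightarrow>
     (\<forall>a\<in>Domn \<alpha>. \<forall>b\<in>Domn \<alpha>.
        f (meet0n \<alpha> a b) + \<alpha> * f (joinn \<alpha> 0 a b) + (1 - \<alpha>) * f (joinn \<alpha> 1 a b)
          \<le> f a + f b)"

definition cube :: "real \<Rightarrow> (real ^ 'n::finite) set" where
  "cube \<alpha> = {x. \<forall>i. -\<alpha> \<le> x $ i \<and> x $ i \<le> 1}"

definition Pset :: "real \<Rightarrow> real ^ 'n::finite \<Rightarrow> (real ^ 'n \<Rightarrow> real) set" where
  "Pset \<alpha> x = {lam. (\<forall>a. a \<notin> Domn \<alpha> \<longrightarrow> lam a = 0) \<and>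
                     (\<forall>a\<in>Domn \<alpha>. 0 \<le> lam a \<and> lam a \<le> 1) \<and>
                     (\<Sum>a\<in>Domn \<alpha>. lam a) = 1 \<and>
                     (\<Sum>a\<in>Domn \<alpha>. lam a *\<^sub>R a) = x}"

definition chain_supported :: "real \<Rightarrow> (real ^ 'n::finite \<Rightarrow> real) \<Rightarrow> bool" where
  "chain_supported \<alpha> lam \<longleftrightarrow>
     (\<forall>a\<in>Domn \<alpha>. \<forall>b\<in>Domn \<alpha>. lam a \<noteq> 0 \<longrightarrow> lam b \<noteq> 0 \<longrightarrow>
        preDn \<alpha> a b \<or> preDn \<alpha> b a)"

definition lam_chain :: "real \<Rightarrow> real ^ 'n::finite \<Rightarrow> (real ^ 'n \<Rightarrow> real)" where
  "lam_chain \<alpha> x = (THE lam. lam \<in> Pset \<alpha> x \<and> chain_supported \<alpha> lam)"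

definition lovasz_ext :: "real \<Rightarrow> (real ^ 'n::finite \<Rightarrow> real) \<Rightarrow> real ^ 'n \<Rightarrow> real" where
  "lovasz_ext \<alpha> f x = (\<Sum>a\<in>Domn \<alpha>. lam_chain \<alpha> x a * f a)"

end

theory Submission
  imports Defs
begin

lemma finite_Domn: "finite (Domn \<alpha> :: (real^'n::finite) set)"
proof -
  have "(Domn \<alpha> :: (real^'n) set) \<subseteq> vec_lambda ` (PiE UNIV (\<lambda>_. Dom \<alpha>))"
  proof
    fix a :: "real^'n" assume "a \<in> Domn \<alpha>"
    then have "vec_nth a \<in> PiE UNIV (\<lambda>_. Dom \<alpha>)" by (auto simp: Domn_def PiE_iff)
    then show "a \<in> vec_lambda ` (PiE UNIV (\<lambda>_. Dom \<alpha>))" by (metis image_eqI vec_nth_inverse)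
  qed
  moreover have "finite (PiE (UNIV::'n set) (\<lambda>_. Dom \<alpha>))" by (rule finite_PiE) (auto simp: Dom_def)
  ultimately show ?thesis using finite_subset finite_imageI by blast
qed

lemma Dom_cases: "x \<in> Dom \<alpha> \<longleftrightarrow> x = -\<alpha> \<or> x = 0 \<or> x = 1" by (auto simp: Dom_def)

lemma coord_facts:
  assumes "0 < \<alpha>" "x \<in> Dom \<alpha>" "y \<in> Dom \<alpha>"
  shows "meet0 \<alpha> x y + \<alpha> * joinD \<alpha> 0 x y + (1-\<alpha>) * joinD \<alpha> 1 x y = x + y"
    and "preD \<alpha> (meet0 \<alpha> x y) (joinD \<alpha> 0 x y)"
    and "preD \<alpha> (joinD \<alpha> 0 x y) (joinD \<alpha> 1 x y)"
    and "preD \<alpha> (meet0 \<alpha> x y) (joinD \<alpha> 1 x y)"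
    and "meet0 \<alpha> x y \<in> Dom \<alpha>" "joinD \<alpha> 0 x y \<in> Dom \<alpha>" "joinD \<alpha> 1 x y \<in> Dom \<alpha>"
  using assms by (auto simp: Dom_def meet0_def joinD_def preD_def doubleton_eq_iff algebra_simps)

lemma sign_facts:
  assumes "0 < \<alpha>" "x \<in> Dom \<alpha>" "s = 1 \<or> s = -\<alpha>"
  shows "meet0 \<alpha> x s = 0 \<or> meet0 \<alpha> x s = s"
    and "joinD \<alpha> 0 x s = 0 \<or> joinD \<alpha> 0 x s = s"
    and "joinD \<alpha> 1 (joinD \<alpha> 1 x s) s = joinD \<alpha> 1 x s"
    and "x = 0 \<or> x = s \<Longrightarrow> meet0 \<alpha> x s = x \<and> joinD \<alpha> 0 x s = s \<and> joinD \<alpha> 1 x s = s"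
    and "x = 0 \<or> x = s \<Longrightarrow> meet0 \<alpha> x 0 = 0 \<and> joinD \<alpha> 0 x 0 = x \<and> joinD \<alpha> 1 x 0 = x"
  using assms by (auto simp: Dom_def meet0_def joinD_def preD_def doubleton_eq_iff algebra_simps)

definition wt :: "real \<Rightarrow> real^'n::finite \<Rightarrow> 'n \<Rightarrow> real" where
  "wt \<alpha> x i = (if 0 \<le> x$i then x$i else - x$i / \<alpha>)"
definition sg :: "real \<Rightarrow> real^'n::finite \<Rightarrow> 'n \<Rightarrow> real" where
  "sg \<alpha> x i = (if 0 \<le> x$i then 1 else - \<alpha>)"

lemma chain_coord_eq:
  assumes "chain_supported \<alpha> lam" "c \<in> Domn \<alpha>" "d \<in> Domn \<alpha>" "lam c \<noteq> 0" "lam d \<noteq> 0"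
    "c$i \<noteq> 0" "d$i \<noteq> 0"
  shows "c$i = d$i"
  using assms unfolding chain_supported_def preDn_def preD_def by metis

lemma Pset_coord:
  assumes "lam \<in> Pset \<alpha> x"
  shows "x$i = (\<Sum>c\<in>Domn \<alpha>. lam c * c$i)"
proof -
  have "x = (\<Sum>c\<in>Domn \<alpha>. lam c *\<^sub>R c)" using assms by (simp add: Pset_def)
  then show ?thesis by simp
qed

lemma S_sum:
  assumes "0 < \<alpha>" "lam \<in> Pset \<alpha> x" "chain_supported \<alpha> lam"
  shows "(\<Sum>c\<in>{c\<in>Domn \<alpha>. lam c \<noteq> 0 \<and> c$i \<noteq> 0}. lam c) = wt \<alpha> x i"
    and "\<And>c. c \<in> Domn \<alpha> \<Longrightarrow> lam c \<noteq> 0 \<Longrightarrow> c$i \<noteq> 0 \<Longrightarrow> c$i = sg \<alpha> x i"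
proof -
  define S where "S = {c\<in>Domn \<alpha>. lam c \<noteq> 0 \<and> c$i \<noteq> 0}"
  have fin: "finite S" unfolding S_def by (rule finite_subset[OF _ finite_Domn]) auto
  have nn: "\<And>c. c \<in> Domn \<alpha> \<Longrightarrow> 0 \<le> lam c" using assms(2) by (auto simp: Pset_def)
  have xi: "x$i = (\<Sum>c\<in>S. lam c * c$i)"
    unfolding Pset_coord[OF assms(2)] S_def
    by (rule sum.mono_neutral_right) (auto simp: finite_Domn)
  have "(\<Sum>c\<in>S. lam c) = wt \<alpha> x i \<and> (\<forall>c\<in>S. c$i = sg \<alpha> x i)"
  proof (cases "S = {}")
    case True
    then show ?thesis using xi by (simp add: wt_def)
  next
    case False
    then obtain c0 where c0: "c0 \<in> S" by auto
    have same: "\<And>c. c \<in> S \<Longrightarrow> c$i = c0$i"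
      using chain_coord_eq[OF assms(3)] c0 unfolding S_def by blast
    have xi2: "x$i = c0$i * (\<Sum>c\<in>S. lam c)"
      unfolding xi sum_distrib_left by (rule sum.cong) (auto simp: same)
    have "(\<Sum>c\<in>S. lam c) \<ge> lam c0" using c0 fin nn
      by (intro member_le_sum) (auto simp: S_def)
    moreover have "lam c0 > 0" using c0 nn unfolding S_def by force
    ultimately have pos: "(\<Sum>c\<in>S. lam c) > 0" by linarith
    have "c0$i = 1 \<or> c0$i = -\<alpha>" using c0 unfolding S_def Domn_def Dom_def by auto
    then show ?thesis
    proof
      assume h: "c0$i = 1"
      then have "x$i = (\<Sum>c\<in>S. lam c)" using xi2 by simp
      then show ?thesis using pos same h by (simp add: wt_def sg_def)
    next
      assume h: "c0$i = -\<alpha>"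
      then have xx: "x$i = -\<alpha> * (\<Sum>c\<in>S. lam c)" using xi2 by simp
      have "\<alpha> * (\<Sum>c\<in>S. lam c) > 0" using pos assms(1) by (rule mult_pos_pos[rotated])
      then have neg: "x$i < 0" using xx by linarith
      have "wt \<alpha> x i = - x$i / \<alpha>" using neg by (simp add: wt_def)
      also have "\<dots> = (\<Sum>c\<in>S. lam c)" unfolding xx using assms(1) by (simp add: field_simps)
      finally have "wt \<alpha> x i = (\<Sum>c\<in>S. lam c)" .
      moreover have "sg \<alpha> x i = -\<alpha>" using neg by (simp add: sg_def)
      ultimately show ?thesis using same h by auto
    qed
  qed
  then have H1: "(\<Sum>c\<in>S. lam c) = wt \<alpha> x i" and H2: "\<forall>c\<in>S. c$i = sg \<alpha> x i" by auto
  show "(\<Sum>c\<in>{c\<in>Domn \<alpha>. lam c \<noteq> 0 \<and> c$i \<noteq> 0}. lam c) = wt \<alpha> x i"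
    using H1 unfolding S_def .
  show "\<And>c. c \<in> Domn \<alpha> \<Longrightarrow> lam c \<noteq> 0 \<Longrightarrow> c$i \<noteq> 0 \<Longrightarrow> c$i = sg \<alpha> x i"
    using H2 unfolding S_def by blast
qed

lemma upward:
  assumes "0 < \<alpha>" "lam \<in> Pset \<alpha> x" "chain_supported \<alpha> lam"
    and c: "c \<in> Domn \<alpha>" "lam c \<noteq> 0" "c$i \<noteq> 0" and w: "wt \<alpha> x i \<le> wt \<alpha> x j"
  shows "c$j \<noteq> 0"
proof
  assume cj: "c$j = 0"
  define S where "S = (\<lambda>i. {c\<in>Domn \<alpha>. lam c \<noteq> 0 \<and> c$i \<noteq> 0})"
  have fin: "finite (S k)" for k unfolding S_def by (rule finite_subset[OF _ finite_Domn]) auto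
  have nn: "\<And>c. c \<in> Domn \<alpha> \<Longrightarrow> 0 \<le> lam c" using assms(2) by (auto simp: Pset_def)
  have sub: "S j \<subseteq> S i"
  proof
    fix d assume d: "d \<in> S j"
    then have "preDn \<alpha> c d \<or> preDn \<alpha> d c" using assms(3) c unfolding chain_supported_def S_def by auto
    moreover have "\<not> preD \<alpha> (d$j) (c$j)" using d cj unfolding preD_def S_def by auto
    then have "\<not> preDn \<alpha> d c" unfolding preDn_def by auto
    ultimately have "preDn \<alpha> c d" by auto
    then have "preD \<alpha> (c$i) (d$i)" unfolding preDn_def by auto
    then have "d$i = c$i" using c(3) unfolding preD_def by auto
    then show "d \<in> S i" using d c(3) unfolding S_def by auto
  qed
  have "(\<Sum>d\<in>S i. lam d) = (\<Sum>d\<in>S j. lam d) + (\<Sum>d\<in>S i - S j. lam d)"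
    using sub fin by (metis add.commute sum.subset_diff)
  moreover have "(\<Sum>d\<in>S i - S j. lam d) \<ge> lam c"
    using c cj fin nn by (intro member_le_sum) (auto simp: S_def)
  moreover have "lam c > 0" using c nn by force
  ultimately have "(\<Sum>d\<in>S j. lam d) < (\<Sum>d\<in>S i. lam d)" by linarith
  then show False using S_sum(1)[OF assms(1-3)] w unfolding S_def by simp
qed

lemma cross_comparable:
  assumes "0 < \<alpha>" "lam \<in> Pset \<alpha> x" "chain_supported \<alpha> lam"
    "mu \<in> Pset \<alpha> x" "chain_supported \<alpha> mu"
    and c: "c \<in> Domn \<alpha>" "lam c \<noteq> 0" and d: "d \<in> Domn \<alpha>" "mu d \<noteq> 0"
  shows "preDn \<alpha> c d \<or> preDn \<alpha> d c"
proof -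
  have incl: "(\<forall>k. c$k \<noteq> 0 \<longrightarrow> d$k \<noteq> 0) \<or> (\<forall>k. d$k \<noteq> 0 \<longrightarrow> c$k \<noteq> 0)"
  proof (rule ccontr)
    assume "\<not> ?thesis"
    then obtain i j where ij: "c$i \<noteq> 0" "d$i = 0" "d$j \<noteq> 0" "c$j = 0" by auto
    show False
    proof (cases "wt \<alpha> x i \<le> wt \<alpha> x j")
      case True
      then show False using upward[OF assms(1-3) c ij(1)] ij by auto
    next
      case False
      then show False using upward[OF assms(1) assms(4,5) d ij(3)] ij by auto
    qed
  qed
  have dom0: "\<And>y. y \<in> Dom \<alpha> \<Longrightarrow> preD \<alpha> 0 y" by (auto simp: Dom_def preD_def)
  from incl show ?thesis
  proof
    assume h: "\<forall>k. c$k \<noteq> 0 \<longrightarrow> d$k \<noteq> 0"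
    have "preDn \<alpha> c d" unfolding preDn_def
    proof
      fix k show "preD \<alpha> (c$k) (d$k)"
      proof (cases "c$k = 0")
        case True then show ?thesis using dom0 d(1) by (simp add: Domn_def)
      next
        case False
        then have "c$k = sg \<alpha> x k" "d$k = sg \<alpha> x k"
          using S_sum(2)[OF assms(1-3) c] S_sum(2)[OF assms(1) assms(4,5) d] h by auto
        then show ?thesis by (simp add: preD_def)
      qed
    qed
    then show ?thesis ..
  next
    assume h: "\<forall>k. d$k \<noteq> 0 \<longrightarrow> c$k \<noteq> 0"
    have "preDn \<alpha> d c" unfolding preDn_def
    proof
      fix k show "preD \<alpha> (d$k) (c$k)"
      proof (cases "d$k = 0")
        case True then show ?thesis using dom0 c(1) by (simp add: Domn_def)
      next
        case False
        then have "c$k = sg \<alpha> x k" "d$k = sg \<alpha> x k"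
          using S_sum(2)[OF assms(1-3) c] S_sum(2)[OF assms(1) assms(4,5) d] h by auto
        then show ?thesis by (simp add: preD_def)
      qed
    qed
    then show ?thesis ..
  qed
qed

definition Zs :: "real^'n::finite \<Rightarrow> 'n set" where "Zs c = {i. c$i \<noteq> 0}"

lemma preDn_Zs: "preDn \<alpha> c d \<Longrightarrow> Zs c \<subseteq> Zs d"
proof
  fix i assume "preDn \<alpha> c d" "i \<in> Zs c"
  then have "preD \<alpha> (c$i) (d$i)" "c$i \<noteq> 0" unfolding preDn_def Zs_def by auto
  then show "i \<in> Zs d" unfolding preD_def Zs_def by auto
qed

lemma preDn_Zs_eq: "preDn \<alpha> c d \<Longrightarrow> Zs c = Zs d \<Longrightarrow> c = d"
proof -
  assume a: "preDn \<alpha> c d" "Zs c = Zs d"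
  show "c = d"
  proof (rule vec_eq_iff[THEN iffD2], rule allI)
    fix k
    have "preD \<alpha> (c$k) (d$k)" using a(1) unfolding preDn_def by auto
    moreover have "c$k = 0 \<longleftrightarrow> d$k = 0" using a(2) unfolding Zs_def by auto
    ultimately show "c$k = d$k" unfolding preD_def by auto
  qed
qed

lemma chain_indep:
  assumes "finite K" "\<forall>c\<in>K. \<forall>d\<in>K. preDn \<alpha> c d \<or> preDn \<alpha> d c"
    "(\<Sum>c\<in>K. \<nu> c) = 0" "(\<Sum>c\<in>K. \<nu> c *\<^sub>R c) = (0::real^'n::finite)"
  shows "\<forall>c\<in>K. \<nu> c = 0"
  using assms
proof (induction "card K" arbitrary: K rule: less_induct)
  case less
  show ?case
  proof (cases "K = {}")
    case True then show ?thesis by simp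
  next
    case False
    define M where "M = Max ((\<lambda>c. card (Zs c)) ` K)"
    have "M \<in> (\<lambda>c. card (Zs c)) ` K" unfolding M_def using False less.prems(1) by (intro Max_in) auto
    then obtain c where c: "c \<in> K" "card (Zs c) = M" by auto
    have cmax: "\<And>d. d \<in> K \<Longrightarrow> card (Zs d) \<le> card (Zs c)"
      unfolding c(2) M_def using less.prems(1) by (intro Max_ge) auto
    have below: "\<And>d. d \<in> K \<Longrightarrow> d \<noteq> c \<Longrightarrow> Zs d \<subset> Zs c"
    proof -
      fix d assume d: "d \<in> K" "d \<noteq> c"
      have "preDn \<alpha> c d \<or> preDn \<alpha> d c" using less.prems(2) c(1) d(1) by auto
      then show "Zs d \<subset> Zs c"
      proof
        assume h: "preDn \<alpha> c d"
        then have "Zs c \<subseteq> Zs d" by (rule preDn_Zs)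
        moreover have "card (Zs d) \<le> card (Zs c)" using cmax d by auto
        ultimately have "Zs c = Zs d" by (meson card_seteq finite)
        then have "c = d" using h preDn_Zs_eq by blast
        then show ?thesis using d by auto
      next
        assume h: "preDn \<alpha> d c"
        then have "Zs d \<subseteq> Zs c" by (rule preDn_Zs)
        moreover have "Zs d \<noteq> Zs c" using h preDn_Zs_eq d(2) by blast
        ultimately show ?thesis by auto
      qed
    qed
    define K' where "K' = K - {c}"
    have finK': "finite K'" using less.prems(1) unfolding K'_def by auto
    have sumsplit: "\<And>g :: real^'n \<Rightarrow> 'b::comm_monoid_add. (\<Sum>d\<in>K. g d) = g c + (\<Sum>d\<in>K'. g d)"
      unfolding K'_def using less.prems(1) c(1) by (simp add: sum.remove)
    have nuc: "\<nu> c = 0"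
    proof (cases "K' = {}")
      case True
      then show ?thesis using less.prems(3) sumsplit[of \<nu>] by simp
    next
      case False
      define M' where "M' = Max ((\<lambda>c. card (Zs c)) ` K')"
      have "M' \<in> (\<lambda>c. card (Zs c)) ` K'" unfolding M'_def using False finK' by (intro Max_in) auto
      then obtain d' where d': "d' \<in> K'" "card (Zs d') = M'" by auto
      have dmax: "\<And>d. d \<in> K' \<Longrightarrow> card (Zs d) \<le> card (Zs d')"
        unfolding d'(2) M'_def using finK' by (intro Max_ge) auto
      have allin: "\<And>d. d \<in> K' \<Longrightarrow> Zs d \<subseteq> Zs d'"
      proof -
        fix d assume d: "d \<in> K'"
        have "preDn \<alpha> d' d \<or> preDn \<alpha> d d'" using less.prems(2) d'(1) d unfolding K'_def by auto
        then show "Zs d \<subseteq> Zs d'"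
        proof
          assume h: "preDn \<alpha> d' d"
          then have "Zs d' \<subseteq> Zs d" by (rule preDn_Zs)
          moreover have "card (Zs d) \<le> card (Zs d')" using dmax d by auto
          ultimately show ?thesis using card_seteq[of "Zs d" "Zs d'"] by auto
        next
          assume h: "preDn \<alpha> d d'"
          then show ?thesis by (rule preDn_Zs)
        qed
      qed
      have "Zs d' \<subset> Zs c" using below d' unfolding K'_def by auto
      then obtain i where i: "i \<in> Zs c" "i \<notin> Zs d'" by auto
      have zero: "\<And>d. d \<in> K' \<Longrightarrow> d$i = 0" using allin i(2) unfolding Zs_def by auto
      have "0 = (\<Sum>d\<in>K. \<nu> d *\<^sub>R d)$i" using less.prems(4) by simp
      also have "\<dots> = \<nu> c * c$i + (\<Sum>d\<in>K'. \<nu> d * d$i)" unfolding sumsplit by simp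
      also have "(\<Sum>d\<in>K'. \<nu> d * d$i) = 0" using zero by simp
      finally have "\<nu> c * c$i = 0" by simp
      then show ?thesis using i(1) unfolding Zs_def by simp
    qed
    have "\<forall>d\<in>K'. \<nu> d = 0"
    proof (rule less.hyps)
      show "card K' < card K" unfolding K'_def using c(1) less.prems(1) by (metis card_Diff1_less)
      show "finite K'" by (rule finK')
      show "\<forall>c\<in>K'. \<forall>d\<in>K'. preDn \<alpha> c d \<or> preDn \<alpha> d c" using less.prems(2) unfolding K'_def by auto
      show "(\<Sum>c\<in>K'. \<nu> c) = 0" using less.prems(3) sumsplit[of \<nu>] nuc by simp
      show "(\<Sum>c\<in>K'. \<nu> c *\<^sub>R c) = 0" using less.prems(4) sumsplit[of "\<lambda>d. \<nu> d *\<^sub>R d"] nuc by simp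
    qed
    then show ?thesis using nuc unfolding K'_def by auto
  qed
qed

lemma uniq:
  assumes "0 < \<alpha>" "lam \<in> Pset \<alpha> x" "chain_supported \<alpha> lam"
    "mu \<in> Pset \<alpha> x" "chain_supported \<alpha> mu"
  shows "lam = mu"
proof -
  define K where "K = {c\<in>Domn \<alpha>. lam c \<noteq> 0 \<or> mu c \<noteq> 0}"
  have finK: "finite K" unfolding K_def by (rule finite_subset[OF _ finite_Domn]) auto
  have comp: "\<forall>c\<in>K. \<forall>d\<in>K. preDn \<alpha> c d \<or> preDn \<alpha> d c"
  proof (intro ballI)
    fix c d assume c: "c \<in> K" and d: "d \<in> K"
    show "preDn \<alpha> c d \<or> preDn \<alpha> d c"
      using c d assms(3,5) cross_comparable[OF assms] cross_comparable[OF assms]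
      unfolding K_def chain_supported_def by blast
  qed
  have out: "\<And>c. c \<in> Domn \<alpha> - K \<Longrightarrow> lam c - mu c = 0" unfolding K_def by auto
  have s1: "(\<Sum>c\<in>Domn \<alpha>. lam c - mu c) = (\<Sum>c\<in>K. lam c - mu c)"
    by (rule sum.mono_neutral_right) (auto simp: finite_Domn K_def)
  have s2: "(\<Sum>c\<in>Domn \<alpha>. (lam c - mu c) *\<^sub>R c) = (\<Sum>c\<in>K. (lam c - mu c) *\<^sub>R c)"
    by (rule sum.mono_neutral_right) (auto simp: finite_Domn K_def)
  have "(\<Sum>c\<in>K. lam c - mu c) = (\<Sum>c\<in>Domn \<alpha>. lam c) - (\<Sum>c\<in>Domn \<alpha>. mu c)"
    unfolding s1[symmetric] by (rule sum_subtractf)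
  also have "\<dots> = 0" using assms(2,4) unfolding Pset_def by simp
  finally have e1: "(\<Sum>c\<in>K. lam c - mu c) = 0" .
  have "(\<Sum>c\<in>K. (lam c - mu c) *\<^sub>R c) = (\<Sum>c\<in>Domn \<alpha>. (lam c - mu c) *\<^sub>R c)" using s2 by simp
  also have "\<dots> = (\<Sum>c\<in>Domn \<alpha>. lam c *\<^sub>R c - mu c *\<^sub>R c)" by (simp add: scaleR_left_diff_distrib)
  also have "\<dots> = (\<Sum>c\<in>Domn \<alpha>. lam c *\<^sub>R c) - (\<Sum>c\<in>Domn \<alpha>. mu c *\<^sub>R c)"
    by (rule sum_subtractf)
  also have "\<dots> = 0" using assms(2,4) unfolding Pset_def by simp
  finally have e2: "(\<Sum>c\<in>K. (lam c - mu c) *\<^sub>R c) = 0" .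
  have z: "\<forall>c\<in>K. lam c - mu c = 0" using chain_indep[OF finK comp e1 e2] by blast
  show ?thesis
  proof
    fix c show "lam c = mu c"
    proof (cases "c \<in> Domn \<alpha>")
      case True then show ?thesis using z unfolding K_def by auto
    next
      case False then show ?thesis using assms(2,4) unfolding Pset_def by auto
    qed
  qed
qed

lemma lam_chain_eq:
  assumes "0 < \<alpha>" "lam \<in> Pset \<alpha> x" "chain_supported \<alpha> lam"
  shows "lam_chain \<alpha> x = lam"
  unfolding lam_chain_def using assms uniq by (intro the_equality) auto

definition chainpt :: "('n::finite \<Rightarrow> real) \<Rightarrow> (nat \<Rightarrow> 'n) \<Rightarrow> nat \<Rightarrow> real^'n" where
  "chainpt s p k = (\<chi> i. if i \<in> p ` {..<k} then s i else 0)"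

definition uu :: "('n::finite \<Rightarrow> real) \<Rightarrow> (nat \<Rightarrow> 'n) \<Rightarrow> nat \<Rightarrow> real" where
  "uu w p k = (if k = 0 then 1 else if k \<le> CARD('n) then w (p (k-1)) else 0)"

definition lamE :: "('n::finite \<Rightarrow> real) \<Rightarrow> ('n \<Rightarrow> real) \<Rightarrow> (nat \<Rightarrow> 'n) \<Rightarrow> real^'n \<Rightarrow> real" where
  "lamE s w p a = (\<Sum>k\<le>CARD('n). if a = chainpt s p k then uu w p k - uu w p (Suc k) else 0)"

lemma sort_enum:
  fixes w :: "'n::finite \<Rightarrow> real"
  shows "\<exists>p. bij_betw p {..<CARD('n)} UNIV \<and> (\<forall>j j'. j \<le> j' \<longrightarrow> j' < CARD('n) \<longrightarrow> w (p j') \<le> w (p j))"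
proof -
  obtain xs :: "'n list" where xs: "distinct xs" "set xs = UNIV"
    using finite_distinct_list[of "UNIV::'n set"] by auto
  define ys where "ys = sort_key (\<lambda>i. - w i) xs"
  have ys: "distinct ys" "set ys = UNIV" using xs unfolding ys_def by auto
  have len: "length ys = CARD('n)" using distinct_card[OF ys(1)] ys(2) by simp
  have srt: "sorted (map (\<lambda>i. - w i) ys)" unfolding ys_def by (rule sorted_sort_key)
  have "bij_betw ((!) ys) {..<CARD('n)} UNIV" using bij_betw_nth[OF ys(1)] len ys(2) by simp
  moreover have "\<forall>j j'. j \<le> j' \<longrightarrow> j' < CARD('n) \<longrightarrow> w (ys ! j') \<le> w (ys ! j)"
  proof (intro allI impI)
    fix j j' :: nat assume "j \<le> j'" "j' < CARD('n)"
    then have "map (\<lambda>i. - w i) ys ! j \<le> map (\<lambda>i. - w i) ys ! j'"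
      using sorted_nth_mono[OF srt] len by simp
    then show "w (ys ! j') \<le> w (ys ! j)" using \<open>j \<le> j'\<close> \<open>j' < CARD('n)\<close> len by simp
  qed
  ultimately show ?thesis by blast
qed

lemma chainpt_Domn: "(\<And>i. s i \<in> Dom \<alpha>) \<Longrightarrow> 0 \<in> Dom \<alpha> \<Longrightarrow> chainpt s p k \<in> Domn \<alpha>"
  unfolding chainpt_def Domn_def by auto

lemma sum_lamE:
  fixes \<phi> :: "real^'n::finite \<Rightarrow> 'b::real_vector"
  assumes "\<And>k. chainpt s p k \<in> Domn \<alpha>"
  shows "(\<Sum>a\<in>Domn \<alpha>. lamE s w p a *\<^sub>R \<phi> a) =
         (\<Sum>k\<le>CARD('n). (uu w p k - uu w p (Suc k)) *\<^sub>R \<phi> (chainpt s p k))"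
proof -
  have "(\<Sum>a\<in>Domn \<alpha>. lamE s w p a *\<^sub>R \<phi> a) =
        (\<Sum>a\<in>Domn \<alpha>. \<Sum>k\<le>CARD('n). (if a = chainpt s p k then (uu w p k - uu w p (Suc k)) *\<^sub>R \<phi> a else 0))"
    unfolding lamE_def scaleR_sum_left by (intro sum.cong refl) auto
  also have "\<dots> = (\<Sum>k\<le>CARD('n). \<Sum>a\<in>Domn \<alpha>. (if a = chainpt s p k then (uu w p k - uu w p (Suc k)) *\<^sub>R \<phi> a else 0))"
    by (rule sum.swap)
  also have "\<dots> = (\<Sum>k\<le>CARD('n). (uu w p k - uu w p (Suc k)) *\<^sub>R \<phi> (chainpt s p k))"
  proof (intro sum.cong refl)
    fix k
    show "(\<Sum>a\<in>Domn \<alpha>. (if a = chainpt s p k then (uu w p k - uu w p (Suc k)) *\<^sub>R \<phi> a else 0)) =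
      (uu w p k - uu w p (Suc k)) *\<^sub>R \<phi> (chainpt s p k)"
      by (subst sum.delta[OF finite_Domn]) (simp add: assms)
  qed
  finally show ?thesis .
qed

lemma tele:
  fixes F :: "nat \<Rightarrow> real"
  shows "q \<le> N \<Longrightarrow> (\<Sum>k\<le>N. if q < k then F k - F (Suc k) else 0) = F (Suc q) - F (Suc N)"
proof (induction N)
  case 0 then show ?case by simp
next
  case (Suc N)
  show ?case
  proof (cases "q = Suc N")
    case True
    have "(\<Sum>k\<le>Suc N. if q < k then F k - F (Suc k) else 0) = 0"
      using True by (intro sum.neutral) auto
    then show ?thesis using True by simp
  next
    case False
    then have "q \<le> N" using Suc.prems by simp
    then show ?thesis using Suc.IH by simp
  qed
qed

lemma chainpt_coord:
  assumes "inj_on p {..<CARD('n::finite)}" "q < CARD('n)" "k \<le> CARD('n)"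
  shows "(chainpt s p k :: real^'n) $ (p q) = (if q < k then s (p q) else 0)"
proof -
  have "p q \<in> p ` {..<k} \<longleftrightarrow> q < k"
  proof
    assume "p q \<in> p ` {..<k}"
    then obtain j where "j < k" "p q = p j" by auto
    then have "j = q" using assms inj_on_eq_iff[OF assms(1)] by auto
    then show "q < k" using \<open>j < k\<close> by simp
  qed auto
  then show ?thesis unfolding chainpt_def by simp
qed

lemma chainpt_mono: "k \<le> l \<Longrightarrow> (\<And>i. preD \<alpha> 0 (s i)) \<Longrightarrow> preDn \<alpha> (chainpt s p k) (chainpt s p l)"
  unfolding preDn_def chainpt_def by (auto simp: preD_def)

lemma existence:
  fixes x :: "real^'n::finite"
  assumes "0 < \<alpha>" "x \<in> cube \<alpha>"
  obtains p where "bij_betw p {..<CARD('n)} UNIV"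
    "lamE (sg \<alpha> x) (wt \<alpha> x) p \<in> Pset \<alpha> x"
    "chain_supported \<alpha> (lamE (sg \<alpha> x) (wt \<alpha> x) p)"
proof -
  define w where "w = wt \<alpha> x"
  define s where "s = sg \<alpha> x"
  define N where "N = CARD('n)"
  obtain p where p: "bij_betw p {..<N} UNIV" and srt: "\<And>j j'. j \<le> j' \<Longrightarrow> j' < N \<Longrightarrow> w (p j') \<le> w (p j)"
    using sort_enum[of w] unfolding N_def by blast
  have Npos: "0 < N" unfolding N_def by simp
  have w01: "0 \<le> w i \<and> w i \<le> 1" for i
    using assms unfolding w_def wt_def cube_def by (auto simp: field_simps)
  have sw: "s i * w i = x$i" for i using assms(1) unfolding s_def w_def sg_def wt_def by auto
  have sDom: "s i \<in> Dom \<alpha>" for i unfolding s_def sg_def Dom_def by auto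
  have s0: "preD \<alpha> 0 (s i)" for i unfolding s_def sg_def preD_def by auto
  have cD: "\<And>k. chainpt s p k \<in> Domn \<alpha>" by (rule chainpt_Domn[OF sDom]) (simp add: Dom_def)
  define lam where "lam = lamE s w p"
  have umono: "uu w p (Suc k) \<le> uu w p k" for k
  proof -
    consider "k = 0" | "0 < k" "k < N" | "k = N" | "N < k" by linarith
    then show ?thesis
    proof cases
      case 1 then show ?thesis using w01 Npos unfolding uu_def N_def[symmetric] by simp
    next
      case 2 then show ?thesis using srt[of "k-1" k] unfolding uu_def N_def[symmetric] by simp
    next
      case 3 then show ?thesis using w01 Npos unfolding uu_def N_def[symmetric] by simp
    next
      case 4 then show ?thesis unfolding uu_def N_def[symmetric] by simp
    qed
  qed
  have u0: "uu w p 0 = 1" "uu w p (Suc N) = 0" unfolding uu_def N_def by auto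
  have sumbeta: "(\<Sum>k\<le>N. uu w p k - uu w p (Suc k)) = 1" using sum_telescope[of "uu w p" N] u0 by simp
  have lnn: "0 \<le> lam a" for a unfolding lam_def lamE_def using umono by (intro sum_nonneg) auto
  have lle: "lam a \<le> 1" for a
  proof -
    have "lam a \<le> (\<Sum>k\<le>N. uu w p k - uu w p (Suc k))"
      unfolding lam_def lamE_def N_def using umono by (intro sum_mono) auto
    then show ?thesis using sumbeta by simp
  qed
  have supp: "lam a \<noteq> 0 \<Longrightarrow> \<exists>k\<le>N. a = chainpt s p k" for a
  proof (rule ccontr)
    assume "lam a \<noteq> 0" "\<not> (\<exists>k\<le>N. a = chainpt s p k)"
    then show False unfolding lam_def lamE_def N_def by (simp add: sum.neutral)
  qed
  have out: "a \<notin> Domn \<alpha> \<Longrightarrow> lam a = 0" for a using supp cD by blast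
  have s1: "(\<Sum>a\<in>Domn \<alpha>. lam a) = 1"
    using sum_lamE[OF cD, of w "\<lambda>_. 1::real"] sumbeta unfolding lam_def N_def by simp
  have s2: "(\<Sum>a\<in>Domn \<alpha>. lam a *\<^sub>R a) = x"
  proof (rule vec_eq_iff[THEN iffD2], rule allI)
    fix i
    have "i \<in> p ` {..<N}" using p unfolding bij_betw_def by auto
    then obtain q where q: "q < N" "p q = i" by auto
    have inj: "inj_on p {..<CARD('n)}" using p unfolding bij_betw_def N_def by simp
    have "(\<Sum>a\<in>Domn \<alpha>. lam a *\<^sub>R a) $ i = (\<Sum>k\<le>N. (uu w p k - uu w p (Suc k)) * (chainpt s p k)$i)"
      using sum_lamE[OF cD, of w "\<lambda>a. a"] unfolding lam_def N_def by simp
    also have "\<dots> = (\<Sum>k\<le>N. if q < k then s i * (uu w p k - uu w p (Suc k)) else 0)"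
      using chainpt_coord[OF inj, of q] q unfolding N_def by (intro sum.cong refl) auto
    also have "\<dots> = s i * (\<Sum>k\<le>N. if q < k then uu w p k - uu w p (Suc k) else 0)"
      unfolding sum_distrib_left by (intro sum.cong refl) auto
    also have "\<dots> = s i * (uu w p (Suc q) - uu w p (Suc N))" using tele q by simp
    also have "\<dots> = s i * w i" using q u0 unfolding uu_def N_def by simp
    finally show "(\<Sum>a\<in>Domn \<alpha>. lam a *\<^sub>R a) $ i = x $ i" using sw by simp
  qed
  have "lam \<in> Pset \<alpha> x" unfolding Pset_def using out lnn lle s1 s2 by auto
  moreover have "chain_supported \<alpha> lam" unfolding chain_supported_def
  proof (intro ballI impI)
    fix a b assume "lam a \<noteq> 0" "lam b \<noteq> 0"
    then obtain k l where "a = chainpt s p k" "b = chainpt s p l" using supp by blast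
    then show "preDn \<alpha> a b \<or> preDn \<alpha> b a" using chainpt_mono[of _ _ \<alpha> s p, OF _ s0] by (cases "k \<le> l") auto
  qed
  ultimately show ?thesis using that p unfolding lam_def s_def w_def N_def by blast
qed

definition compat :: "('n::finite \<Rightarrow> real) \<Rightarrow> real^'n \<Rightarrow> bool" where
  "compat s a \<longleftrightarrow> (\<forall>i. a$i = 0 \<or> a$i = s i)"

lemma compat_ops:
  assumes "0 < \<alpha>" "s = 1 \<or> s = -\<alpha>" "x = 0 \<or> x = s" "y = 0 \<or> y = s"
  shows "meet0 \<alpha> x y = (if x = s \<and> y = s then s else 0)"
    and "joinD \<alpha> c x y = (if x = s \<or> y = s then s else 0)"
  using assms(2-4) by (elim disjE; use assms(1) in \<open>simp add: meet0_def joinD_def preD_def doubleton_eq_iff\<close>)+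

lemma meet0n_nth[simp]: "(meet0n \<alpha> a b) $ i = meet0 \<alpha> (a$i) (b$i)" by (simp add: meet0n_def)
lemma joinn_nth[simp]: "(joinn \<alpha> c a b) $ i = joinD \<alpha> c (a$i) (b$i)" by (simp add: joinn_def)

lemma compat_Domn: "compat s a \<Longrightarrow> (\<And>i. s i = 1 \<or> s i = -\<alpha>) \<Longrightarrow> a \<in> Domn \<alpha>"
proof -
  assume c: "compat s a" and s: "\<And>i. s i = 1 \<or> s i = -\<alpha>"
  have "a$i \<in> Dom \<alpha>" for i using c s[of i] unfolding compat_def Dom_def by (cases "a$i = 0") auto
  then show ?thesis unfolding Domn_def by auto
qed

lemma nonneg:
  fixes h :: "real^'n::finite \<Rightarrow> real"
  assumes a0: "0 < \<alpha>" and a1: "\<alpha> \<le> 1" and bs: "alpha_bisubmodular \<alpha> h"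
    and p: "bij_betw p {..<CARD('n)} UNIV" and s: "\<And>i. s i = 1 \<or> s i = -\<alpha>"
    and hc: "\<And>k. k \<le> CARD('n) \<Longrightarrow> h (chainpt s p k) = 0"
  shows "\<forall>a\<in>Domn \<alpha>. 0 \<le> h a"
proof -
  define N where "N = CARD('n)"
  have bsI: "\<And>a b. a \<in> Domn \<alpha> \<Longrightarrow> b \<in> Domn \<alpha> \<Longrightarrow>
     h (meet0n \<alpha> a b) + \<alpha> * h (joinn \<alpha> 0 a b) + (1 - \<alpha>) * h (joinn \<alpha> 1 a b) \<le> h a + h b"
    using bs unfolding alpha_bisubmodular_def by blast
  have cc: "compat s (chainpt s p k)" for k unfolding compat_def chainpt_def by auto
  have step1: "\<And>a. k \<le> N \<Longrightarrow> compat s a \<Longrightarrow> (\<forall>i. a$i \<noteq> 0 \<longrightarrow> i \<in> p ` {..<k}) \<Longrightarrow> 0 \<le> h a" for k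
  proof (induction k)
    case 0
    have "a = chainpt s p 0" using "0.prems" by (simp add: vec_eq_iff chainpt_def)
    then show ?case using hc by simp
  next
    case (Suc k)
    define c where "c = chainpt s p k"
    have ca: "a$i = 0 \<or> a$i = s i" for i using Suc.prems(2) unfolding compat_def by auto
    have ccc: "c$i = 0 \<or> c$i = s i" for i using cc unfolding compat_def c_def by auto
    have cv: "c$i = (if i \<in> p ` {..<k} then s i else 0)" for i unfolding c_def chainpt_def by simp
    define m where "m = meet0n \<alpha> a c"
    define J where "J = joinn \<alpha> 0 a c"
    have mv: "m$i = (if a$i = s i \<and> c$i = s i then s i else 0)" for i
      unfolding m_def using compat_ops(1)[OF a0 s ca ccc] by simp
    have Jv: "J$i = (if a$i = s i \<or> c$i = s i then s i else 0)" for i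
      unfolding J_def using compat_ops(2)[OF a0 s ca ccc] by simp
    have J1: "joinn \<alpha> 1 a c = J"
      unfolding vec_eq_iff J_def using compat_ops(2)[OF a0 s ca ccc] by simp
    have s0: "s i \<noteq> 0" for i using s[of i] a0 by auto
    have "0 \<le> h m"
    proof (rule Suc.IH)
      show "k \<le> N" using Suc.prems by simp
      show "compat s m" unfolding compat_def mv by auto
      show "\<forall>i. m$i \<noteq> 0 \<longrightarrow> i \<in> p ` {..<k}" unfolding mv cv using s0 by auto
    qed
    moreover have "h J = 0"
    proof (cases "a$(p k) = s (p k)")
      case True
      have "J = chainpt s p (Suc k)"
        unfolding vec_eq_iff Jv cv chainpt_def
      proof
        fix i
        have "i \<in> p ` {..<Suc k} \<longleftrightarrow> i \<in> p ` {..<k} \<or> i = p k" by (auto simp: lessThan_Suc)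
        moreover have "a$i \<noteq> 0 \<Longrightarrow> i \<in> p ` {..<Suc k}" using Suc.prems(3) by auto
        ultimately show "(if a $ i = s i \<or> (if i \<in> p ` {..<k} then s i else 0) = s i then s i else 0) =
           (\<chi> i. if i \<in> p ` {..<Suc k} then s i else 0) $ i"
          using True ca[of i] s0[of i] by auto
      qed
      then show ?thesis using hc Suc.prems(1) unfolding N_def by simp
    next
      case False
      have "J = c"
        unfolding vec_eq_iff Jv cv
      proof
        fix i
        have "i \<in> p ` {..<Suc k} \<longleftrightarrow> i \<in> p ` {..<k} \<or> i = p k" by (auto simp: lessThan_Suc)
        moreover have "a$i \<noteq> 0 \<Longrightarrow> i \<in> p ` {..<Suc k}" using Suc.prems(3) by auto
        ultimately show "(if a $ i = s i \<or> (if i \<in> p ` {..<k} then s i else 0) = s i then s i else 0) =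
           (if i \<in> p ` {..<k} then s i else 0)"
          using False ca[of i] s0[of i] by auto
      qed
      then show ?thesis using hc Suc.prems(1) unfolding c_def N_def by simp
    qed
    moreover have "h c = 0" unfolding c_def using hc Suc.prems(1) unfolding N_def by simp
    moreover have "h m + \<alpha> * h J + (1 - \<alpha>) * h J \<le> h a + h c"
      using bsI[of a c] compat_Domn[OF Suc.prems(2) s] compat_Domn[OF cc s] J1
      unfolding m_def J_def c_def by simp
    ultimately show ?case by (simp add: algebra_simps)
  qed
  have allN: "p ` {..<N} = UNIV" using p unfolding bij_betw_def N_def by simp
  have compat_nn: "compat s a \<Longrightarrow> 0 \<le> h a" for a using step1[of N a] allN by simp
  define T where "T = chainpt s p N"
  have Tv: "T$i = s i" for i unfolding T_def chainpt_def allN by simp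
  have TD: "T \<in> Domn \<alpha>" unfolding T_def by (rule compat_Domn[OF cc s])
  have hT: "h T = 0" unfolding T_def N_def using hc by simp
  have sD: "s i = 1 \<or> s i = -\<alpha>" for i by (rule s)
  have good: "compat s (meet0n \<alpha> b T) \<and> compat s (joinn \<alpha> 0 b T) \<and> joinn \<alpha> 1 b T \<in> Domn \<alpha>
      \<and> joinn \<alpha> 1 (joinn \<alpha> 1 b T) T = joinn \<alpha> 1 b T" if b: "b \<in> Domn \<alpha>" for b
  proof -
    have bi: "b$i \<in> Dom \<alpha>" for i using b unfolding Domn_def by auto
    have sDom: "s i \<in> Dom \<alpha>" for i using s[of i] unfolding Dom_def by auto
    show ?thesis
      unfolding compat_def Domn_def vec_eq_iff using sign_facts[OF a0 bi sD] coord_facts(7)[OF a0 bi sDom] Tv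
      by auto
  qed
  show ?thesis
  proof
    fix a :: "real^'n" assume a: "a \<in> Domn \<alpha>"
    define j1 where "j1 = joinn \<alpha> 1 a T"
    have g1: "compat s (meet0n \<alpha> a T)" "compat s (joinn \<alpha> 0 a T)" "j1 \<in> Domn \<alpha>"
      "joinn \<alpha> 1 j1 T = j1" using good[OF a] unfolding j1_def by auto
    have g2: "compat s (meet0n \<alpha> j1 T)" "compat s (joinn \<alpha> 0 j1 T)" using good[OF g1(3)] by auto
    have "h (meet0n \<alpha> j1 T) + \<alpha> * h (joinn \<alpha> 0 j1 T) + (1 - \<alpha>) * h j1 \<le> h j1"
      using bsI[OF g1(3) TD] g1(4) hT by simp
    then have "\<alpha> * h j1 \<ge> h (meet0n \<alpha> j1 T) + \<alpha> * h (joinn \<alpha> 0 j1 T)" by (simp add: algebra_simps)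
    moreover have "0 \<le> h (meet0n \<alpha> j1 T)" "0 \<le> \<alpha> * h (joinn \<alpha> 0 j1 T)"
      using compat_nn[OF g2(1)] compat_nn[OF g2(2)] a0 by auto
    ultimately have "0 \<le> \<alpha> * h j1" by linarith
    then have hj1: "0 \<le> h j1" using a0 by (simp add: zero_le_mult_iff)
    have "h (meet0n \<alpha> a T) + \<alpha> * h (joinn \<alpha> 0 a T) + (1 - \<alpha>) * h j1 \<le> h a"
      using bsI[OF a TD] hT unfolding j1_def by simp
    moreover have "0 \<le> h (meet0n \<alpha> a T)" "0 \<le> \<alpha> * h (joinn \<alpha> 0 a T)" "0 \<le> (1-\<alpha>) * h j1"
      using compat_nn[OF g1(1)] compat_nn[OF g1(2)] a0 a1 hj1 by auto
    ultimately show "0 \<le> h a" by linarith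
  qed
qed

definition gfun :: "real \<Rightarrow> (nat \<Rightarrow> real) \<Rightarrow> (nat \<Rightarrow> 'n) \<Rightarrow> real^'n::finite \<Rightarrow> real" where
  "gfun K coef p y = K + (\<Sum>j<CARD('n). coef j * y$(p j))"

lemma gfun_affine:
  fixes p :: "nat \<Rightarrow> 'n::finite"
  assumes "lam \<in> Pset \<alpha> y"
  shows "(\<Sum>a\<in>Domn \<alpha>. lam a * gfun K coef p a) = gfun K coef p y"
proof -
  have s1: "(\<Sum>a\<in>Domn \<alpha>. lam a) = 1" using assms unfolding Pset_def by simp
  have "(\<Sum>a\<in>Domn \<alpha>. lam a * gfun K coef p a) =
        K * (\<Sum>a\<in>Domn \<alpha>. lam a) + (\<Sum>a\<in>Domn \<alpha>. \<Sum>j<CARD('n). coef j * (lam a * a$(p j)))"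
    unfolding gfun_def by (simp add: algebra_simps sum.distrib sum_distrib_left sum_distrib_right)
  also have "\<dots> = K + (\<Sum>j<CARD('n). coef j * (\<Sum>a\<in>Domn \<alpha>. lam a * a$(p j)))"
    unfolding s1 by (simp add: sum.swap[of _ "Domn \<alpha>"] sum_distrib_left)
  also have "\<dots> = gfun K coef p y" unfolding gfun_def Pset_coord[OF assms, symmetric] ..
  finally show ?thesis .
qed

lemma gfun_comb:
  fixes p :: "nat \<Rightarrow> 'n::finite"
  shows "u + v = 1 \<Longrightarrow> gfun K coef p (u *\<^sub>R y + v *\<^sub>R z) = u * gfun K coef p y + v * gfun K coef p z"
proof -
  assume uv: "u + v = 1"
  have "gfun K coef p (u *\<^sub>R y + v *\<^sub>R z) = (u + v) * K + (u * (\<Sum>j<CARD('n). coef j * y$(p j)) + v * (\<Sum>j<CARD('n). coef j * z$(p j)))"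
    unfolding gfun_def using uv by (simp add: algebra_simps sum.distrib sum_distrib_left)
  then show ?thesis unfolding gfun_def by (simp add: algebra_simps)
qed

lemma gfun_mod:
  fixes p :: "nat \<Rightarrow> 'n::finite"
  assumes "0 < \<alpha>" "a \<in> Domn \<alpha>" "b \<in> Domn \<alpha>"
  shows "gfun K coef p (meet0n \<alpha> a b) + \<alpha> * gfun K coef p (joinn \<alpha> 0 a b) + (1-\<alpha>) * gfun K coef p (joinn \<alpha> 1 a b)
     = gfun K coef p a + gfun K coef p b"
proof -
  have e: "meet0 \<alpha> (a$i) (b$i) + \<alpha> * joinD \<alpha> 0 (a$i) (b$i) + (1-\<alpha>) * joinD \<alpha> 1 (a$i) (b$i) = a$i + b$i" for i
    using coord_facts(1)[OF assms(1)] assms(2,3) unfolding Domn_def by auto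
  have "gfun K coef p (meet0n \<alpha> a b) + \<alpha> * gfun K coef p (joinn \<alpha> 0 a b) + (1-\<alpha>) * gfun K coef p (joinn \<alpha> 1 a b)
     = 2 * K + (\<Sum>j<CARD('n). coef j * (meet0 \<alpha> (a$(p j)) (b$(p j)) + \<alpha> * joinD \<alpha> 0 (a$(p j)) (b$(p j)) + (1-\<alpha>) * joinD \<alpha> 1 (a$(p j)) (b$(p j))))"
    unfolding gfun_def by (simp add: sum.distrib sum_subtractf sum_distrib_left ring_distribs) (simp add: algebra_simps)
  also have "\<dots> = 2 * K + (\<Sum>j<CARD('n). coef j * (a$(p j) + b$(p j)))" unfolding e ..
  also have "\<dots> = gfun K coef p a + gfun K coef p b"
    unfolding gfun_def by (simp add: algebra_simps sum.distrib)
  finally show ?thesis .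
qed

lemma cube_comb:
  assumes "y \<in> cube \<alpha>" "z \<in> cube \<alpha>" "0 \<le> u" "0 \<le> v" "u + v = 1"
  shows "u *\<^sub>R y + v *\<^sub>R z \<in> cube \<alpha>"
proof -
  have "-\<alpha> \<le> u * y$i + v * z$i \<and> u * y$i + v * z$i \<le> 1" for i
  proof -
    have y: "-\<alpha> \<le> y$i" "y$i \<le> 1" and z: "-\<alpha> \<le> z$i" "z$i \<le> 1" using assms(1,2) unfolding cube_def by auto
    have "u * (-\<alpha>) \<le> u * y$i" "u * y$i \<le> u * 1" using mult_left_mono[OF y(1) assms(3)] mult_left_mono[OF y(2) assms(3)] by auto
    moreover have "v * (-\<alpha>) \<le> v * z$i" "v * z$i \<le> v * 1" using mult_left_mono[OF z(1) assms(4)] mult_left_mono[OF z(2) assms(4)] by auto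
    moreover have "\<alpha> = u * \<alpha> + v * \<alpha>" using assms(5) by (metis distrib_right mult_1)
    ultimately show ?thesis using assms(5) by linarith
  qed
  then show ?thesis unfolding cube_def by simp
qed

lemma Domn_cube: "0 \<le> \<alpha> \<Longrightarrow> \<alpha> \<le> 1 \<Longrightarrow> Domn \<alpha> \<subseteq> cube \<alpha>"
proof
  fix x :: "real^'n" assume a: "0 \<le> \<alpha>" "\<alpha> \<le> 1" and x: "x \<in> Domn \<alpha>"
  have "-\<alpha> \<le> x$i \<and> x$i \<le> 1" for i
  proof -
    have "x$i = -\<alpha> \<or> x$i = 0 \<or> x$i = 1" using x unfolding Domn_def Dom_def by auto
    then show ?thesis using a by auto
  qed
  then show "x \<in> cube \<alpha>" unfolding cube_def by auto
qed

lemma lam_chain_Pset: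
  assumes "0 < \<alpha>" "x \<in> cube \<alpha>"
  shows "lam_chain \<alpha> x \<in> Pset \<alpha> x"
proof -
  obtain p where "lamE (sg \<alpha> x) (wt \<alpha> x) p \<in> Pset \<alpha> x" "chain_supported \<alpha> (lamE (sg \<alpha> x) (wt \<alpha> x) p)"
    using existence[OF assms] by blast
  moreover have "lam_chain \<alpha> x = lamE (sg \<alpha> x) (wt \<alpha> x) p" by (rule lam_chain_eq[OF assms(1)]) fact+
  ultimately show ?thesis by simp
qed

theorem lemma2:
  fixes \<alpha> :: real and f :: "real ^ 'n::finite \<Rightarrow> real"
  assumes "0 < \<alpha>" and "\<alpha> \<le> 1"
  shows "convex_on (cube \<alpha>) (lovasz_ext \<alpha> f) \<longleftrightarrow> alpha_bisubmodular \<alpha> f"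
proof
  assume cv: "convex_on (cube \<alpha>) (lovasz_ext \<alpha> f)"
  show "alpha_bisubmodular \<alpha> f" unfolding alpha_bisubmodular_def
  proof (intro ballI)
    fix a b :: "real^'n" assume a: "a \<in> Domn \<alpha>" and b: "b \<in> Domn \<alpha>"
    have "(Domn \<alpha> :: (real^'n) set) \<subseteq> cube \<alpha>" using Domn_cube[of \<alpha>] assms by simp
    then have ac: "a \<in> cube \<alpha>" "b \<in> cube \<alpha>" using a b by blast+
    have point: "lovasz_ext \<alpha> f c = f c" if c: "c \<in> Domn \<alpha>" for c
    proof -
      define d where "d = (\<lambda>e. if e = c then (1::real) else 0)"
      have "d \<in> Pset \<alpha> c" unfolding Pset_def d_def  using c
        by (auto simp: finite_Domn sum.delta sum.delta' if_distrib[of "\<lambda>t. t *\<^sub>R _"] cong: if_cong)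
      moreover have "chain_supported \<alpha> d" unfolding chain_supported_def d_def preDn_def preD_def by auto
      ultimately have "lam_chain \<alpha> c = d" using lam_chain_eq[OF assms(1)] by blast
      then show ?thesis unfolding lovasz_ext_def d_def using c
        by (simp add: finite_Domn if_distrib[of "\<lambda>t. t * _"] sum.delta' cong: if_cong)
    qed
    define m where "m = meet0n \<alpha> a b"
    define j0 where "j0 = joinn \<alpha> 0 a b"
    define j1 where "j1 = joinn \<alpha> 1 a b"
    have ai: "a$i \<in> Dom \<alpha>" "b$i \<in> Dom \<alpha>" for i using a b unfolding Domn_def by auto
    have mD: "m \<in> Domn \<alpha>" "j0 \<in> Domn \<alpha>" "j1 \<in> Domn \<alpha>"
      unfolding m_def j0_def j1_def Domn_def using coord_facts(5-7)[OF assms(1) ai] by auto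
    define z where "z = (1/2) *\<^sub>R a + (1/2) *\<^sub>R b"
    define mu where "mu = (\<lambda>e. (if e = m then 1/2 else 0) + (if e = j0 then \<alpha>/2 else 0) + (if e = j1 then (1-\<alpha>)/2 else (0::real)))"
    have musum: "(\<Sum>e\<in>Domn \<alpha>. mu e *\<^sub>R g e) = (1/2) *\<^sub>R g m + (\<alpha>/2) *\<^sub>R g j0 + ((1-\<alpha>)/2) *\<^sub>R g j1"
      for g :: "real^'n \<Rightarrow> 'b::real_vector"
      unfolding mu_def scaleR_add_left sum.distrib using mD
      by (simp add: finite_Domn if_distrib[of "\<lambda>t. t *\<^sub>R _"] sum.delta' cong: if_cong)
    have "mu \<in> Pset \<alpha> z" unfolding Pset_def
    proof (intro CollectI conjI allI ballI impI)
      fix e :: "real^'n" assume "e \<notin> Domn \<alpha>" then show "mu e = 0" unfolding mu_def using mD by auto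
    next
      fix e :: "real^'n"
      show "0 \<le> mu e" unfolding mu_def using assms by auto
      show "mu e \<le> 1" unfolding mu_def using assms by (auto simp: field_simps)
    next
      show "(\<Sum>e\<in>Domn \<alpha>. mu e) = 1" using musum[of "\<lambda>_. 1::real"] by (simp add: field_simps)
    next
      have "(\<Sum>e\<in>Domn \<alpha>. mu e *\<^sub>R e) = (1/2) *\<^sub>R m + (\<alpha>/2) *\<^sub>R j0 + ((1-\<alpha>)/2) *\<^sub>R j1"
        using musum[of "\<lambda>e. e"] by simp
      also have "\<dots> = z" unfolding z_def vec_eq_iff m_def j0_def j1_def
      proof
        fix i
        have "meet0 \<alpha> (a$i) (b$i) + \<alpha> * joinD \<alpha> 0 (a$i) (b$i) + (1-\<alpha>) * joinD \<alpha> 1 (a$i) (b$i) = a$i + b$i"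
          using coord_facts(1)[OF assms(1) ai] .
        then show "((1/2) *\<^sub>R meet0n \<alpha> a b + (\<alpha>/2) *\<^sub>R joinn \<alpha> 0 a b + ((1-\<alpha>)/2) *\<^sub>R joinn \<alpha> 1 a b) $ i =
          ((1/2) *\<^sub>R a + (1/2) *\<^sub>R b) $ i" by (simp add: field_simps)
      qed
      finally show "(\<Sum>e\<in>Domn \<alpha>. mu e *\<^sub>R e) = z" .
    qed
    moreover have "chain_supported \<alpha> mu" unfolding chain_supported_def
    proof (intro ballI impI)
      fix c d assume "mu c \<noteq> 0" "mu d \<noteq> 0"
      then have "c \<in> {m, j0, j1}" "d \<in> {m, j0, j1}" unfolding mu_def by (auto split: if_splits)
      moreover have "preDn \<alpha> m j0" "preDn \<alpha> j0 j1" "preDn \<alpha> m j1"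
        unfolding preDn_def m_def j0_def j1_def using coord_facts(2-4)[OF assms(1) ai] by auto
      moreover have "preDn \<alpha> e e" for e unfolding preDn_def preD_def by auto
      ultimately show "preDn \<alpha> c d \<or> preDn \<alpha> d c" by auto
    qed
    ultimately have lz: "lam_chain \<alpha> z = mu" using lam_chain_eq[OF assms(1)] by blast
    have "lovasz_ext \<alpha> f z = (1/2) * f m + (\<alpha>/2) * f j0 + ((1-\<alpha>)/2) * f j1"
      unfolding lovasz_ext_def lz using musum[of f] by simp
    moreover have "lovasz_ext \<alpha> f z \<le> (1/2) * lovasz_ext \<alpha> f a + (1/2) * lovasz_ext \<alpha> f b"
    proof -
      have H: "\<And>x y u v. x \<in> cube \<alpha> \<Longrightarrow> y \<in> cube \<alpha> \<Longrightarrow> 0 \<le> u \<Longrightarrow> 0 \<le> v \<Longrightarrow> u + v = 1 \<Longrightarrow>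
          lovasz_ext \<alpha> f (u *\<^sub>R x + v *\<^sub>R y) \<le> u * lovasz_ext \<alpha> f x + v * lovasz_ext \<alpha> f y"
        using cv unfolding convex_on_def by blast
      show ?thesis unfolding z_def by (rule H[OF ac]) auto
    qed
    ultimately show "f (meet0n \<alpha> a b) + \<alpha> * f (joinn \<alpha> 0 a b) + (1 - \<alpha>) * f (joinn \<alpha> 1 a b) \<le> f a + f b"
      using point[OF a] point[OF b] unfolding m_def j0_def j1_def by (simp add: field_simps)
  qed
next
  assume bs: "alpha_bisubmodular \<alpha> f"
  show "convex_on (cube \<alpha>) (lovasz_ext \<alpha> f)" unfolding convex_on_def
  proof (intro conjI ballI allI impI)
    show "convex (cube \<alpha>)" unfolding convex_def using cube_comb by blast
  next
    fix u v :: "real^'n" and t1 t2 :: real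
    assume uv: "u \<in> cube \<alpha>" "v \<in> cube \<alpha>" and t: "0 \<le> t1" "0 \<le> t2" "t1 + t2 = 1"
    define z where "z = t1 *\<^sub>R u + t2 *\<^sub>R v"
    have zc: "z \<in> cube \<alpha>" unfolding z_def using cube_comb uv t by blast
    define s where "s = sg \<alpha> z"
    obtain p where p: "bij_betw p {..<CARD('n)} UNIV"
      "lamE s (wt \<alpha> z) p \<in> Pset \<alpha> z" "chain_supported \<alpha> (lamE s (wt \<alpha> z) p)"
      using existence[OF assms(1) zc] unfolding s_def by blast
    have lz: "lam_chain \<alpha> z = lamE s (wt \<alpha> z) p" using lam_chain_eq[OF assms(1) p(2,3)] .
    define c where "c = chainpt s p"
    have s1: "s i = 1 \<or> s i = -\<alpha>" for i unfolding s_def sg_def by auto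
    have s0: "s i \<noteq> 0" for i using s1[of i] assms(1) by auto
    define coef where "coef = (\<lambda>j. (f (c (Suc j)) - f (c j)) / s (p j))"
    define g where "g = gfun (f (c 0)) coef p"
    have inj: "inj_on p {..<CARD('n)}" using p(1) unfolding bij_betw_def by simp
    have gc: "g (c k) = f (c k)" if k: "k \<le> CARD('n)" for k
    proof -
      have "(\<Sum>j<CARD('n). coef j * (c k)$(p j)) = (\<Sum>j<CARD('n). if j \<in> {..<k} then f (c (Suc j)) - f (c j) else 0)"
        unfolding c_def coef_def using chainpt_coord[OF inj _ k] s0 by (intro sum.cong refl) auto
      also have "\<dots> = (\<Sum>j\<in>{..<CARD('n)} \<inter> {..<k}. f (c (Suc j)) - f (c j))"
        by (rule sum.inter_restrict[symmetric]) simp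
      also have "{..<CARD('n)} \<inter> {..<k} = {..<k}" using k by auto
      also have "(\<Sum>j\<in>{..<k}. f (c (Suc j)) - f (c j)) = f (c k) - f (c 0)" by (rule sum_lessThan_telescope)
      finally show ?thesis unfolding g_def gfun_def by simp
    qed
    have hbs: "alpha_bisubmodular \<alpha> (\<lambda>y. f y - g y)" unfolding alpha_bisubmodular_def
    proof (intro ballI)
      fix a b :: "real^'n" assume "a \<in> Domn \<alpha>" "b \<in> Domn \<alpha>"
      then show "f (meet0n \<alpha> a b) - g (meet0n \<alpha> a b) + \<alpha> * (f (joinn \<alpha> 0 a b) - g (joinn \<alpha> 0 a b)) +
           (1 - \<alpha>) * (f (joinn \<alpha> 1 a b) - g (joinn \<alpha> 1 a b)) \<le> f a - g a + (f b - g b)"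
        using bs gfun_mod[OF assms(1), of a b "f (c 0)" coef p] unfolding alpha_bisubmodular_def g_def
        by (simp add: algebra_simps)
    qed
    have gle: "\<forall>a\<in>Domn \<alpha>. 0 \<le> f a - g a"
    proof (rule nonneg[OF assms(1,2) hbs p(1)])
      show "\<And>i. s i = 1 \<or> s i = -\<alpha>" by (rule s1)
      show "\<And>k. k \<le> CARD('n) \<Longrightarrow> f (chainpt s p k) - g (chainpt s p k) = 0" using gc unfolding c_def by simp
    qed
    have below: "g y \<le> lovasz_ext \<alpha> f y" if y: "y \<in> cube \<alpha>" for y
    proof -
      have P: "lam_chain \<alpha> y \<in> Pset \<alpha> y" by (rule lam_chain_Pset[OF assms(1) y])
      then have "g y = (\<Sum>a\<in>Domn \<alpha>. lam_chain \<alpha> y a * g a)" unfolding g_def by (simp add: gfun_affine)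
      also have "\<dots> \<le> (\<Sum>a\<in>Domn \<alpha>. lam_chain \<alpha> y a * f a)"
        using P gle unfolding Pset_def by (intro sum_mono mult_left_mono) auto
      finally show ?thesis unfolding lovasz_ext_def .
    qed
    have eqz: "lovasz_ext \<alpha> f z = g z"
    proof -
      have "lovasz_ext \<alpha> f z = (\<Sum>a\<in>Domn \<alpha>. lam_chain \<alpha> z a * g a)"
        unfolding lovasz_ext_def
      proof (intro sum.cong refl)
        fix a :: "real^'n" assume "a \<in> Domn \<alpha>"
        show "lam_chain \<alpha> z a * f a = lam_chain \<alpha> z a * g a"
        proof (cases "lam_chain \<alpha> z a = 0")
          case False
          have "\<exists>k\<le>CARD('n). a = c k"
          proof (rule ccontr)
            assume "\<not> (\<exists>k\<le>CARD('n). a = c k)"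
            then have "lamE s (wt \<alpha> z) p a = 0" unfolding lamE_def c_def by (intro sum.neutral) auto
            then show False using False lz by simp
          qed
          then obtain k where "k \<le> CARD('n)" "a = c k" by blast
          then show ?thesis using gc by simp
        qed simp
      qed
      also have "\<dots> = g z" unfolding g_def using lam_chain_Pset[OF assms(1) zc] by (simp add: gfun_affine)
      finally show ?thesis .
    qed
    have "g z = t1 * g u + t2 * g v" unfolding z_def g_def by (rule gfun_comb[OF t(3)])
    then have "lovasz_ext \<alpha> f z = t1 * g u + t2 * g v" using eqz by simp
    also have "\<dots> \<le> t1 * lovasz_ext \<alpha> f u + t2 * lovasz_ext \<alpha> f v"
      using below uv t by (intro add_mono mult_left_mono) auto
    finally show "lovasz_ext \<alpha> f (t1 *\<^sub>R u + t2 *\<^sub>R v) \<le> t1 * lovasz_ext \<alpha> f u + t2 * lovasz_ext \<alpha> f v"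
      unfolding z_def .
  qed
qed

end
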